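(* There is an absolute constant $C>0$ such that for every $m\in\mathbb{N}$ and every $\boldsymbol{\sigma}\in\{0,1\}^m$, with $N=2^{m+1}$, $$ \left|L_2(\widetilde{\mathcal{H}}_m^{\mathrm{sym}}(\boldsymbol{\sigma}))-\frac{1}{N}\sqrt{\frac{\log N}{24\log 2}}\right|\le \frac{C}{N}, $$ i.e. $L_2(\widetilde{\mathcal{H}}_m^{\mathrm{sym}}(\boldsymbol{\sigma}))=\frac{1}{N}\sqrt{\frac{\log{N}}{24\log{2}}}+\mathcal{O}\left(\frac{1}{N}\right)$, where $\log$ is the natural logarithm.
   Context: For an $N$-element point multiset $\mathcal{P}=\{\boldsymbol{x}_0,\dots,\boldsymbol{x}_{N-1}\}$ in $[0,1]^2$ and $\alpha,\beta\in(0,1]$, the local discrepancy is $\Delta(\alpha,\beta,\mathcal{P})=A([0,\alpha)\times[0,\beta),\mathcal{P})-N\alpha\beta$, where $A([0,\alpha)\times[0,\beta),\mathcal{P})$ is the number of indices $0\le n\le N-1$ with $\boldsymbol{x}_n\in[0,\alpha)\times[0,\beta)$ (points counted with multiplicity). The $L_2$ discrepancy is $L_2(\mathcal{P})=\frac1N\left(\int_0^1\int_0^1|\Delta(\alpha,\beta,\mathcal{P})|^2\,d\alpha\,d\beta\right)^{1/2}$. For $\boldsymbol{\sigma}\in\{0,1\}^m$ the shifted Hammersley point set is $$\mathcal{H}_m(\boldsymbol{\sigma})=\left\{\left(\frac{t_m}{2}+\frac{t_{m-1}}{2^2}+\dots+\frac{t_1}{2^m},\ \frac{s_1}{2}+\dots+\frac{s_m}{2^m}\right):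 t_1,\dots,t_m\in\{0,1\}\right\},$$ where $s_j=t_j\oplus\sigma_j$ ($\oplus$ is addition modulo 2); it has $2^m$ points. The set $\widetilde{\mathcal{H}}_m^{\mathrm{sym}}(\boldsymbol{\sigma})$ is the union (as a multiset of $2^{m+1}$ points, some of which may coincide) of $\mathcal{H}_m(\boldsymbol{\sigma})$ with $\{(x,1-y):(x,y)\in\mathcal{H}_m(\boldsymbol{\sigma})\}$. *)

theory Defs
  imports "HOL-Analysis.Analysis"
begin

(* A point multiset is represented as a list of points in real \<times> real (multiplicities preserved). *)

definition count_box :: "real \<Rightarrow> real \<Rightarrow> (real \<times> real) list \<Rightarrow> nat" where
  "count_box \<alpha> \<beta> P = length (filter (\<lambda>x. 0 \<le> fst x \<and> fst x < \<alpha> \<and> 0 \<le> snd x \<and> snd x < \<beta>) P)"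

definition local_disc :: "real \<Rightarrow> real \<Rightarrow> (real \<times> real) list \<Rightarrow> real" where
  "local_disc \<alpha> \<beta> P = real (count_box \<alpha> \<beta> P) - real (length P) * \<alpha> * \<beta>"

definition L2_disc :: "(real \<times> real) list \<Rightarrow> real" where
  "L2_disc P = (1 / real (length P)) *
     sqrt (integral (cbox (0,0) (1,1)) (\<lambda>ab. (local_disc (fst ab) (snd ab) P)\<^sup>2))"

(* Digit vectors t = (t_1,...,t_m) are lists with t_j = t ! (j-1); similarly sigma. *)
definition hammersley_point :: "nat \<Rightarrow> bool list \<Rightarrow> bool list \<Rightarrow> real \<times> real" where
  "hammersley_point m \<sigma> t =
     ((\<Sum>j=1..m. (if t ! (j - 1) then 1 else 0) / 2 ^ (m + 1 - j)),
      (\<Sum>j=1..m. (if t ! (j - 1) \<noteq> \<sigma> ! (j - 1) then 1 else 0) / 2 ^ j))"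

definition shifted_hammersley :: "nat \<Rightarrow> bool list \<Rightarrow> (real \<times> real) list" where
  "shifted_hammersley m \<sigma> = map (hammersley_point m \<sigma>) (List.n_lists m [False, True])"

definition sym_hammersley :: "nat \<Rightarrow> bool list \<Rightarrow> (real \<times> real) list" where
  "sym_hammersley m \<sigma> = shifted_hammersley m \<sigma> @ map (\<lambda>(x, y). (x, 1 - y)) (shifted_hammersley m \<sigma>)"

end

theory Submission
  imports Defs
begin

fun pp :: "bool list \<Rightarrow> nat \<Rightarrow> nat" where
  "pp [] u = 0"
| "pp (c#s) u = (if odd u \<noteq> c then 2^length s else 0) + pp s (u div 2)"

lemma pp_less: "pp s u < 2^length s"
proof (induction s arbitrary: u)
  case Nil then show ?case by simp
next
  case (Cons c s)
  have "pp s (u div 2) < 2^length s" by (rule Cons.IH)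
  then show ?case by auto
qed

lemma pp_inj: "inj_on (pp s) {..<2^length s}"
proof (induction s)
  case Nil then show ?case by (simp add: inj_on_def)
next
  case (Cons c s)
  show ?case
  proof (rule inj_onI)
    fix u w assume u: "u \<in> {..<2^length (c#s)}" and w: "w \<in> {..<2^length (c#s)}"
      and eq: "pp (c#s) u = pp (c#s) w"
    have lu: "pp s (u div 2) < 2^length s" and lw: "pp s (w div 2) < 2^length s" by (rule pp_less)+
    have par: "odd u = odd w"
    proof (rule ccontr)
      assume "odd u \<noteq> odd w"
      then show False using eq lu lw by (auto split: if_splits)
    qed
    then have "pp s (u div 2) = pp s (w div 2)" using eq by auto
    moreover have "u div 2 \<in> {..<2^length s}" "w div 2 \<in> {..<2^length s}" using u w by auto
    ultimately have "u div 2 = w div 2" using Cons.IH by (auto simp: inj_on_def)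
    with par show "u = w" by (metis div_mult_mod_eq odd_iff_mod_2_eq_one parity_cases)
  qed
qed

lemma pp_bij: "bij_betw (pp s) {..<2^length s} {..<2^length s}"
proof -
  have "pp s ` {..<2^length s} \<subseteq> {..<2^length s}" using pp_less by auto
  moreover have "card (pp s ` {..<2^length s}) = card {..<(2::nat)^length s}"
    using pp_inj card_image by blast
  ultimately have "pp s ` {..<2^length s} = {..<2^length s}"
    by (simp add: card_subset_eq)
  then show ?thesis using pp_inj by (simp add: bij_betw_def)
qed

lemma sum_pp: "(\<Sum>u<2^length s. f (pp s u)) = (\<Sum>y<2^length s. f y)"
  using sum.reindex_bij_betw[OF pp_bij, of f] by simp

definition AA :: "bool list \<Rightarrow> nat \<Rightarrow> nat \<Rightarrow> nat" where
  "AA s u v = card {k. k < u \<and> pp s k < v}"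

lemma AA_Suc: "AA s (Suc u) v = AA s u v + (if pp s u < v then 1 else 0)"
proof -
  have "{k. k < Suc u \<and> pp s k < v} = {k. k < u \<and> pp s k < v} \<union> (if pp s u < v then {u} else {})"
    by (auto simp: less_Suc_eq)
  then show ?thesis unfolding AA_def by (simp add: card_insert_if)
qed

lemma card_odd_part:
  fixes u :: nat
  shows "card {k. k < u \<and> odd k = c \<and> P (k div 2)} = card {j. j < (u + (if c then 0 else 1)) div 2 \<and> P j}"
proof -
  have "{k. k < u \<and> odd k = c \<and> P (k div 2)} = (\<lambda>j. 2*j + (if c then 1 else 0)) ` {j. j < (u + (if c then 0 else 1)) div 2 \<and> P j}"
  proof (rule set_eqI, rule iffI)
    fix k assume "k \<in> {k. k < u \<and> odd k = c \<and> P (k div 2)}"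
    then show "k \<in> (\<lambda>j. 2*j + (if c then 1 else 0)) ` {j. j < (u + (if c then 0 else 1)) div 2 \<and> P j}"
      by (cases c) (auto intro!: image_eqI[where x="k div 2"] elim!: oddE evenE)
  next
    fix k assume "k \<in> (\<lambda>j. 2*j + (if c then 1 else 0)) ` {j. j < (u + (if c then 0 else 1)) div 2 \<and> P j}"
    then show "k \<in> {k. k < u \<and> odd k = c \<and> P (k div 2)}" by (cases c) auto
  qed
  moreover have "inj (\<lambda>j::nat. 2*j + (if c then 1 else 0))" by (auto simp: inj_def)
  ultimately show ?thesis by (simp add: card_image inj_on_subset)
qed

lemma AA_cons_low:
  assumes "v \<le> 2^length s"
  shows "AA (c#s) u v = AA s ((u + (if c then 0 else 1)) div 2) v"
proof -
  have "{k. k < u \<and> pp (c#s) k < v} = {k. k < u \<and> odd k = c \<and> pp s (k div 2) < v}"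
    using assms by auto
  then show ?thesis unfolding AA_def using card_odd_part[of u c "\<lambda>j. pp s j < v"] by simp
qed

lemma AA_cons_high:
  assumes "w \<le> 2^length s"
  shows "AA (c#s) u (2^length s + w) = (u + (if c then 0 else 1)) div 2 + AA s ((u + (if c then 1 else 0)) div 2) w"
proof -
  have lt: "\<And>k. pp s k < 2^length s" by (rule pp_less)
  have "{k. k < u \<and> pp (c#s) k < 2^length s + w} =
        {k. k < u \<and> odd k = c \<and> True} \<union> {k. k < u \<and> odd k = (\<not> c) \<and> pp s (k div 2) < w}"
    using lt assms by (auto simp: order_less_le_trans[OF lt] add_less_le_mono)
  moreover have "{k. k < u \<and> odd k = c \<and> True} \<inter> {k. k < u \<and> odd k = (\<not> c) \<and> pp s (k div 2) < w} = {}"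
    by auto
  ultimately have "AA (c#s) u (2^length s + w) = card {k. k < u \<and> odd k = c \<and> True} + card {k. k < u \<and> odd k = (\<not> c) \<and> pp s (k div 2) < w}"
    unfolding AA_def by (simp add: card_Un_disjoint)
  also have "\<dots> = (u + (if c then 0 else 1)) div 2 + AA s ((u + (if c then 1 else 0)) div 2) w"
    using card_odd_part[of u c "\<lambda>j. True"] card_odd_part[of u "\<not>c" "\<lambda>j. pp s j < w"]
    unfolding AA_def by simp
  finally show ?thesis .
qed

definition GG :: "bool list \<Rightarrow> nat \<Rightarrow> nat \<Rightarrow> real" where
  "GG s u v = real (AA s u v) - real (AA s u (2^length s - 1 - v))
     + real u * (real (2^length s) - 1 - 2 * real v) / real (2^length s)"

definition hF :: "bool list \<Rightarrow> nat \<Rightarrow> nat \<Rightarrow> real" where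
  "hF s u v = (if pp s u < v then 1 else 0) - (2 * real v + 1) / (2 * real (2^length s))"

definition hT :: "bool list \<Rightarrow> nat \<Rightarrow> nat \<Rightarrow> real" where
  "hT s u v = 1 - (if pp s u < 2^length s - 1 - v then 1 else 0) - (2 * real v + 1) / (2 * real (2^length s))"

lemma GG_anti:
  assumes "v < 2^length s"
  shows "GG s u (2^length s - 1 - v) = - GG s u v"
proof -
  have e: "2^length s - 1 - (2^length s - 1 - v) = v" using assms by simp
  have r: "real (2^length s - 1 - v) = real (2^length s) - 1 - real v" using assms
    by (simp add: of_nat_diff)
  show ?thesis unfolding GG_def e r by (simp add: field_simps)
qed

lemma hT_hF:
  assumes "v < 2^length s"
  shows "hT s u v = - hF s u (2^length s - 1 - v)"
proof -
  have r: "real (2^length s - 1 - v) = real (2^length s) - 1 - real v" using assms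
    by (simp add: of_nat_diff)
  have p: "(0::real) < 2^length s" by simp
  show ?thesis unfolding hT_def hF_def r using p by (simp add: field_simps)
qed

lemma GG_cons_even:
  assumes v: "v < 2^length s"
  shows "GG (c#s) (2*u) v = GG s u v"
proof -
  let ?N = "(2::nat)^length s"
  have e1: "2^length (c#s) - 1 - v = ?N + (?N - 1 - v)" using v by simp
  have a1: "AA (c#s) (2*u) v = AA s u v"
    using AA_cons_low[of v s c "2*u"] v by (cases c) auto
  have a2: "AA (c#s) (2*u) (2^length (c#s) - 1 - v) = u + AA s u (?N - 1 - v)"
    unfolding e1 using AA_cons_high[of "?N - 1 - v" s c "2*u"] by (cases c) auto
  have p: "(0::real) < 2^length s" by simp
  show ?thesis unfolding GG_def a1 a2 using p by (simp add: field_simps)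
qed

lemma GG_cons_odd:
  assumes v: "v < 2^length s"
  shows "GG (c#s) (2*u+1) v = GG s u v + (if c then hT s u v else hF s u v)"
proof -
  let ?N = "(2::nat)^length s"
  have e1: "2^length (c#s) - 1 - v = ?N + (?N - 1 - v)" using v by simp
  have a1: "AA (c#s) (2*u+1) v = AA s (u + (if c then 0 else 1)) v"
    using AA_cons_low[of v s c "2*u+1"] v by (cases c) auto
  have a2: "AA (c#s) (2*u+1) (2^length (c#s) - 1 - v) = u + (if c then 0 else 1) + AA s (u + (if c then 1 else 0)) (?N - 1 - v)"
    unfolding e1 using AA_cons_high[of "?N - 1 - v" s c "2*u+1"] by (cases c) auto
  have p: "(0::real) < 2^length s" by simp
  show ?thesis
  proof (cases c)
    case True
    then show ?thesis unfolding GG_def a1 a2 hT_def using p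
      by (simp add: AA_Suc field_simps)
  next
    case False
    then show ?thesis unfolding GG_def a1 a2 hF_def using p
      by (simp add: AA_Suc field_simps)
  qed
qed

lemma sum_even_odd: "(\<Sum>u<2*M. f u) = (\<Sum>u<M. f (2*u) + f (2*u+1::nat))"
proof (induction M)
  case 0 show ?case by simp
next
  case (Suc M)
  have "(\<Sum>u<2*Suc M. f u) = (\<Sum>u<2*M. f u) + f (2*M) + f (2*M+1)"
    by (simp add: mult_2 add_ac)
  then show ?case using Suc by (simp add: add_ac)
qed

lemma sum_flip: "(\<Sum>v<M. f (M-1-v)) = (\<Sum>v<(M::nat). f v)"
proof -
  have "(\<Sum>v<M. f (M-1-v)) = (\<Sum>v<M. f (M - Suc v))" by simp
  also have "\<dots> = sum f {..<M}" by (rule sum.nat_diff_reindex)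
  finally show ?thesis .
qed

lemma sum_refl: "(\<Sum>v<2*M. f v) = (\<Sum>v<M. f v + f (2*M-1-v::nat))"
proof -
  have "(\<Sum>v<2*M. f v) = (\<Sum>v<M. f v) + (\<Sum>v\<in>{M..<2*M}. f v)"
    using sum.atLeastLessThan_concat[of 0 M "2*M" f] by (simp add: atLeast0LessThan)
  also have "(\<Sum>v\<in>{M..<2*M}. f v) = (\<Sum>v<M. f (M + v))"
  proof -
    have "{M..<2*M} = {0+M..<M+M}" by (simp add: mult_2)
    then have "(\<Sum>v\<in>{M..<2*M}. f v) = (\<Sum>v\<in>{0..<M}. f (v + M))"
      by (simp only: sum.shift_bounds_nat_ivl)
    then show ?thesis by (simp add: atLeast0LessThan add.commute)
  qed
  also have "\<dots> = (\<Sum>v<M. f (M + (M - 1 - v)))" using sum_flip[of "\<lambda>v. f (M+v)" M] by simp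
  also have "\<dots> = (\<Sum>v<M. f (2*M - 1 - v))" by (rule sum.cong) (auto simp: mult_2)
  finally show ?thesis by (simp only: sum.distrib)
qed

definition SS :: "bool list \<Rightarrow> real" where
  "SS s = (\<Sum>u<2^length s. \<Sum>v<2^length s. (GG s u v)^2)"
definition KK :: "bool list \<Rightarrow> real" where
  "KK s = (\<Sum>u<2^length s. \<Sum>v<2^length s. GG s u v * hF s u v)"
definition HH :: "bool list \<Rightarrow> real" where
  "HH s = (\<Sum>u<2^length s. \<Sum>v<2^length s. (hF s u v)^2)"
definition JJ :: "bool list \<Rightarrow> real" where
  "JJ s = (\<Sum>u<2^length s. \<Sum>v<2^length s. hF s u v * hT s u v)"

lemma hT_flip:
  assumes "v < 2^length s"
  shows "hT s u (2^length s - 1 - v) = - hF s u v"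
proof -
  have "2^length s - 1 - (2^length s - 1 - v) = v" using assms by simp
  then show ?thesis using hT_hF[of "2^length s - 1 - v" s u] assms by simp
qed

lemma inner_GhT: "(\<Sum>v<2^length s. GG s u v * hT s u v) = (\<Sum>v<2^length s. GG s u v * hF s u v)"
proof -
  have "(\<Sum>v<2^length s. GG s u v * hT s u v) =
        (\<Sum>v<2^length s. GG s u (2^length s - 1 - v) * hT s u (2^length s - 1 - v))"
    using sum_flip[of "\<lambda>v. GG s u v * hT s u v" "2^length s"] by simp
  also have "\<dots> = (\<Sum>v<2^length s. GG s u v * hF s u v)"
  proof (rule sum.cong[OF refl])
    fix v :: nat assume "v \<in> {..<2^length s}"
    then have v: "v < 2^length s" by simp
    show "GG s u (2^length s - 1 - v) * hT s u (2^length s - 1 - v) = GG s u v * hF s u v"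
      using GG_anti[OF v, of u] hT_flip[OF v, of u] by simp
  qed
  finally show ?thesis .
qed

lemma inner_hT2: "(\<Sum>v<2^length s. (hT s u v)^2) = (\<Sum>v<2^length s. (hF s u v)^2)"
proof -
  have "(\<Sum>v<2^length s. (hT s u v)^2) =
        (\<Sum>v<2^length s. (hT s u (2^length s - 1 - v))^2)"
    using sum_flip[of "\<lambda>v. (hT s u v)^2" "2^length s"] by simp
  also have "\<dots> = (\<Sum>v<2^length s. (hF s u v)^2)"
  proof (rule sum.cong[OF refl])
    fix v :: nat assume "v \<in> {..<2^length s}"
    then have v: "v < 2^length s" by simp
    show "(hT s u (2^length s - 1 - v))^2 = (hF s u v)^2"
      using hT_flip[OF v, of u] by simp
  qed
  finally show ?thesis .
qed

lemma inner_even: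
  "(\<Sum>v<2^length s. (GG (c#s) (2*u) v)^2) = (\<Sum>v<2^length s. (GG s u v)^2)"
  by (rule sum.cong) (auto simp: GG_cons_even)

lemma inner_odd:
  "(\<Sum>v<2^length s. (GG (c#s) (2*u+1) v)^2) = (\<Sum>v<2^length s. (GG s u v)^2)
     + 2 * (\<Sum>v<2^length s. GG s u v * hF s u v) + (\<Sum>v<2^length s. (hF s u v)^2)"
proof -
  let ?h = "\<lambda>v. if c then hT s u v else hF s u v"
  have "(\<Sum>v<2^length s. (GG (c#s) (2*u+1) v)^2) = (\<Sum>v<2^length s. (GG s u v + ?h v)^2)"
  proof (rule sum.cong[OF refl])
    fix v :: nat assume "v \<in> {..<2^length s}"
    then have v: "v < 2^length s" by simp
    show "(GG (c#s) (2*u+1) v)^2 = (GG s u v + ?h v)^2"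
      using GG_cons_odd[OF v, of c u] by simp
  qed
  also have "\<dots> = (\<Sum>v<2^length s. (GG s u v)^2 + 2 * (GG s u v * ?h v) + (?h v)^2)"
    by (rule sum.cong) (auto simp: power2_eq_square algebra_simps)
  also have "\<dots> = (\<Sum>v<2^length s. (GG s u v)^2) + 2 * (\<Sum>v<2^length s. GG s u v * ?h v) + (\<Sum>v<2^length s. (?h v)^2)"
    by (simp add: sum.distrib sum_distrib_left)
  also have "(\<Sum>v<2^length s. GG s u v * ?h v) = (\<Sum>v<2^length s. GG s u v * hF s u v)"
    by (cases c) (simp_all add: inner_GhT)
  also have "(\<Sum>v<2^length s. (?h v)^2) = (\<Sum>v<2^length s. (hF s u v)^2)"
    by (cases c) (simp_all add: inner_hT2)
  finally show ?thesis .
qed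

lemma SS_cons: "SS (c#s) = 4 * SS s + 4 * KK s + 2 * HH s"
proof -
  let ?N = "(2::nat)^length s"
  let ?F = "\<lambda>u. (\<Sum>v<?N. (GG (c#s) u v)^2)"
  have N2: "(2::nat)^length (c#s) = 2 * ?N" by simp
  have "SS (c#s) = (\<Sum>u<2*?N. 2 * ?F u)"
    unfolding SS_def N2
  proof (rule sum.cong[OF refl])
    fix u
    have "(\<Sum>v<2*?N. (GG (c#s) u v)^2) = (\<Sum>v<?N. (GG (c#s) u v)^2 + (GG (c#s) u (2*?N - 1 - v))^2)"
      by (rule sum_refl)
    also have "\<dots> = (\<Sum>v<?N. 2 * (GG (c#s) u v)^2)"
    proof (rule sum.cong[OF refl])
      fix v assume "v \<in> {..<?N}"
      then have "v < 2^length (c#s)" by simp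
      from GG_anti[OF this, of u] show "(GG (c#s) u v)^2 + (GG (c#s) u (2*?N - 1 - v))^2 = 2 * (GG (c#s) u v)^2"
        by simp
    qed
    finally show "(\<Sum>v<2*?N. (GG (c#s) u v)^2) = 2 * ?F u" by (simp add: sum_distrib_left)
  qed
  also have "\<dots> = (\<Sum>u<?N. 2 * ?F (2*u) + 2 * ?F (2*u+1))" by (rule sum_even_odd)
  also have "\<dots> = (\<Sum>u<?N. 4 * (\<Sum>v<?N. (GG s u v)^2) + 4 * (\<Sum>v<?N. GG s u v * hF s u v)
       + 2 * (\<Sum>v<?N. (hF s u v)^2))"
    by (rule sum.cong[OF refl]) (simp only: inner_even inner_odd, simp)
  also have "\<dots> = 4 * SS s + 4 * KK s + 2 * HH s"
    unfolding SS_def KK_def HH_def by (simp add: sum.distrib sum_distrib_left)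
  finally show ?thesis .
qed

lemma pp_cons_even: "pp (c#s) (2*u) = (if c then 2^length s else 0) + pp s u"
  by simp
lemma pp_cons_odd: "pp (c#s) (2*u+1) = (if c then 0 else 2^length s) + pp s u"
  by simp

lemma hF_diff_gen:
  assumes v: "v < 2^length s" and P: "pp (c#s) w = (if tp then 2^length s else 0) + pp s u"
  shows "hF (c#s) w v - hF (c#s) w (2 * 2^length s - 1 - v) = (if tp then hT s u v else hF s u v)"
proof -
  let ?N = "(2::nat)^length s"
  have lt: "pp s u < ?N" by (rule pp_less)
  have r: "real (2 * ?N - 1 - v) = 2 * real ?N - 1 - real v" using v by (simp add: of_nat_diff)
  have p: "(0::real) < 2^length s" by simp
  show ?thesis
  proof (cases tp)
    case True
    have i1: "\<not> (pp (c#s) w < v)" using P True v by simp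
    have i2: "(pp (c#s) w < 2 * ?N - 1 - v) = (pp s u < ?N - 1 - v)" using P True v by auto
    show ?thesis using True p unfolding hF_def hT_def i2 r using i1
      by (simp add: field_simps)
  next
    case False
    have i2: "pp (c#s) w < 2 * ?N - 1 - v" using P False v lt by simp
    have i1: "(pp (c#s) w < v) = (pp s u < v)" using P False by simp
    show ?thesis using False p unfolding hF_def hT_def i1 r using i2
      by (simp add: field_simps)
  qed
qed

lemma KK_cons: "KK (c#s) = 2 * KK s + JJ s"
proof -
  let ?N = "(2::nat)^length s"
  have N2: "(2::nat)^length (c#s) = 2 * ?N" by simp
  let ?D = "\<lambda>u v. hF (c#s) u v - hF (c#s) u (2 * ?N - 1 - v)"
  have "KK (c#s) = (\<Sum>u<2*?N. \<Sum>v<?N. GG (c#s) u v * ?D u v)"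
    unfolding KK_def N2
  proof (rule sum.cong[OF refl])
    fix u
    have "(\<Sum>v<2*?N. GG (c#s) u v * hF (c#s) u v) = (\<Sum>v<?N. GG (c#s) u v * hF (c#s) u v + GG (c#s) u (2*?N - 1 - v) * hF (c#s) u (2*?N - 1 - v))"
      by (rule sum_refl)
    also have "\<dots> = (\<Sum>v<?N. GG (c#s) u v * ?D u v)"
    proof (rule sum.cong[OF refl])
      fix v :: nat assume "v \<in> {..<?N}"
      then have "v < 2^length (c#s)" by simp
      from GG_anti[OF this, of u] show "GG (c#s) u v * hF (c#s) u v + GG (c#s) u (2*?N - 1 - v) * hF (c#s) u (2*?N - 1 - v) = GG (c#s) u v * ?D u v"
        by (simp add: algebra_simps)
    qed
    finally show "(\<Sum>v<2*?N. GG (c#s) u v * hF (c#s) u v) = (\<Sum>v<?N. GG (c#s) u v * ?D u v)" .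
  qed
  also have "\<dots> = (\<Sum>u<?N. (\<Sum>v<?N. GG (c#s) (2*u) v * ?D (2*u) v) + (\<Sum>v<?N. GG (c#s) (2*u+1) v * ?D (2*u+1) v))"
    by (rule sum_even_odd)
  also have "\<dots> = (\<Sum>u<?N. (\<Sum>v<?N. GG s u v * hF s u v + GG s u v * hT s u v + hF s u v * hT s u v))"
  proof (rule sum.cong[OF refl])
    fix u
    show "(\<Sum>v<?N. GG (c#s) (2*u) v * ?D (2*u) v) + (\<Sum>v<?N. GG (c#s) (2*u+1) v * ?D (2*u+1) v) =
          (\<Sum>v<?N. GG s u v * hF s u v + GG s u v * hT s u v + hF s u v * hT s u v)"
      unfolding sum.distrib[symmetric]
    proof (rule sum.cong[OF refl])
      fix v :: nat assume "v \<in> {..<?N}"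
      then have v: "v < ?N" by simp
      have d0: "?D (2*u) v = (if c then hT s u v else hF s u v)"
        using hF_diff_gen[OF v, of c "2*u" c u] pp_cons_even by simp
      have d1: "?D (2*u+1) v = (if \<not> c then hT s u v else hF s u v)"
        using hF_diff_gen[OF v, of c "2*u+1" "\<not> c" u] pp_cons_odd by simp
      show "GG (c#s) (2*u) v * ?D (2*u) v + GG (c#s) (2*u+1) v * ?D (2*u+1) v =
          GG s u v * hF s u v + GG s u v * hT s u v + hF s u v * hT s u v"
        unfolding d0 d1 GG_cons_even[OF v] GG_cons_odd[OF v]
        by (cases c) (simp_all add: algebra_simps)
    qed
  qed
  also have "\<dots> = (\<Sum>u<?N. 2 * (\<Sum>v<?N. GG s u v * hF s u v) + (\<Sum>v<?N. hF s u v * hT s u v))"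
    by (rule sum.cong[OF refl]) (simp add: sum.distrib inner_GhT)
  also have "\<dots> = 2 * KK s + JJ s"
    unfolding KK_def JJ_def by (simp add: sum.distrib sum_distrib_left)
  finally show ?thesis .
qed

lemma sum_ind_less: "(\<Sum>y<N. (if y < a then 1 else 0)::real) = real (min N a)"
  by (induction N) (auto simp: min_def)

lemma sum_real: "(\<Sum>v<N. real v) = real N * (real N - 1) / 2"
  by (induction N) (auto simp: field_simps)

lemma sum_real_sq: "(\<Sum>v<N. (real v)^2) = real N * (real N - 1) * (2 * real N - 1) / 6"
  by (induction N) (auto simp: field_simps power2_eq_square)

lemma HH_inner:
  assumes "v \<le> N"
  shows "(\<Sum>y<N. ((if y < v then 1 else 0) - c)^2) = real v * (1 - 2*c) + real N * c^2"
proof -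
  have "(\<Sum>y<N. ((if y < v then 1 else 0) - c)^2) = (\<Sum>y<N. c^2 + (1 - 2*c) * (if y < v then 1 else 0))"
    by (rule sum.cong) (auto simp: power2_eq_square algebra_simps)
  also have "\<dots> = real N * c^2 + (1 - 2*c) * real (min N v)"
    by (simp add: sum.distrib sum_distrib_left[symmetric] sum_ind_less)
  also have "min N v = v" using assms by simp
  finally show ?thesis by (simp add: algebra_simps)
qed

lemma HH_closed_gen:
  assumes N: "N > 0"
  shows "(\<Sum>v<N. \<Sum>y<N. ((if y < v then 1 else 0) - (2 * real v + 1) / (2 * real N))^2) = (real N)^2/6 + 1/12"
proof -
  have NN: "real N > 0" using N by simp
  have "(\<Sum>v<N. \<Sum>y<N. ((if y < v then 1 else 0) - (2 * real v + 1) / (2 * real N))^2)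
      = (\<Sum>v<N. real v + 1 / (4 * real N) - (real v)^2 / real N)"
  proof (rule sum.cong[OF refl])
    fix v assume "v \<in> {..<N}"
    then have "v \<le> N" by simp
    then show "(\<Sum>y<N. ((if y < v then 1 else 0) - (2 * real v + 1) / (2 * real N))^2) = real v + 1 / (4 * real N) - (real v)^2 / real N"
      unfolding HH_inner[OF \<open>v \<le> N\<close>] using NN by (simp add: field_simps power2_eq_square)
  qed
  also have "\<dots> = real N * (real N - 1) / 2 + real N / (4 * real N) - (real N * (real N - 1) * (2 * real N - 1) / 6) / real N"
    by (simp add: sum.distrib sum_subtractf sum_real sum_divide_distrib[symmetric] sum_real_sq)
  also have "\<dots> = (real N)^2/6 + 1/12" using NN by (simp add: field_simps power2_eq_square)
  finally show ?thesis .
qed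

lemma HH_closed: "HH s = (real (2^length s))^2 / 6 + 1/12"
proof -
  let ?N = "(2::nat)^length s"
  let ?f = "\<lambda>y. \<Sum>v<?N. ((if y < v then 1 else 0) - (2 * real v + 1) / (2 * real ?N))^2"
  have "HH s = (\<Sum>u<?N. ?f (pp s u))" unfolding HH_def hF_def by simp
  also have "\<dots> = (\<Sum>y<?N. ?f y)" by (rule sum_pp)
  also have "\<dots> = (\<Sum>v<?N. \<Sum>y<?N. ((if y < v then 1 else 0) - (2 * real v + 1) / (2 * real ?N))^2)"
    by (rule sum.swap)
  also have "\<dots> = (real ?N)^2/6 + 1/12" by (rule HH_closed_gen) simp
  finally show ?thesis .
qed

lemma sum_ind_less2: "(\<Sum>y<N. ((if y < a then 1 else 0) * (if y < b then 1 else 0))::real) = real (min N (min a b))"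
proof -
  have eq: "\<And>y. ((if y < a then 1 else 0) * (if y < b then 1 else 0)::real) = (if y < min a b then 1 else 0)"
    by auto
  show ?thesis by (simp only: eq sum_ind_less)
qed

lemma JJ_inner:
  assumes "v < N"
  shows "(\<Sum>y<N. ((if y < v then 1 else 0) - c) * (1 - (if y < N - 1 - v then 1 else 0) - c))
     = real v - real (min v (N - 1 - v)) - c * (2 * real v + 1) + real N * c^2"
proof -
  have "(\<Sum>y<N. ((if y < v then 1 else 0) - c) * (1 - (if y < N - 1 - v then 1 else 0) - c))
    = (\<Sum>y<N. (if y < v then 1 else 0) - ((if y < v then 1 else 0) * (if y < N - 1 - v then 1 else 0))
         - c * (if y < v then 1 else 0) - c + c * (if y < N - 1 - v then 1 else 0) + c^2)"
    by (rule sum.cong) (auto simp: algebra_simps power2_eq_square)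
  also have "\<dots> = real (min N v) - real (min N (min v (N - 1 - v))) - c * real (min N v) - real N * c
       + c * real (min N (N - 1 - v)) + real N * c^2"
    by (simp add: sum.distrib sum_subtractf sum_distrib_left[symmetric] sum_ind_less sum_ind_less2)
  also have "\<dots> = real v - real (min v (N - 1 - v)) - c * (2 * real v + 1) + real N * c^2"
    using assms by (simp add: of_nat_diff algebra_simps min_def)
  finally show ?thesis .
qed

lemma JJ_swap: "JJ s = (\<Sum>v<2^length s. \<Sum>y<2^length s. ((if y < v then 1 else 0) - (2 * real v + 1) / (2 * real ((2::nat)^length s)))
     * (1 - (if y < 2^length s - 1 - v then 1 else 0) - (2 * real v + 1) / (2 * real ((2::nat)^length s))))" (is "_ = ?R")
proof -
  let ?N = "(2::nat)^length s"
  let ?f = "\<lambda>y. \<Sum>v<?N. ((if y < v then 1 else 0) - (2 * real v + 1) / (2 * real ?N))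
     * (1 - (if y < ?N - 1 - v then 1 else 0) - (2 * real v + 1) / (2 * real ?N))"
  have "JJ s = (\<Sum>u<?N. ?f (pp s u))" unfolding JJ_def hF_def hT_def by simp
  also have "\<dots> = (\<Sum>y<?N. ?f y)" by (rule sum_pp)
  also have "\<dots> = ?R" by (rule sum.swap)
  finally show ?thesis .
qed

lemma JJ_gen:
  assumes N: "N > 0"
  shows "(\<Sum>v<N. \<Sum>y<N. ((if y < v then 1 else 0) - (2 * real v + 1) / (2 * real N))
     * (1 - (if y < N - 1 - v then 1 else 0) - (2 * real v + 1) / (2 * real N)))
   = (\<Sum>v<N. real v - real (min v (N - 1 - v))) - (\<Sum>v<N. (2 * real v + 1)^2) / (4 * real N)"
proof -
  have NN: "real N > 0" using N by simp
  have "(\<Sum>v<N. \<Sum>y<N. ((if y < v then 1 else 0) - (2 * real v + 1) / (2 * real N))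
     * (1 - (if y < N - 1 - v then 1 else 0) - (2 * real v + 1) / (2 * real N)))
    = (\<Sum>v<N. (real v - real (min v (N - 1 - v))) - (2 * real v + 1)^2 / (4 * real N))"
  proof (rule sum.cong[OF refl])
    fix v assume "v \<in> {..<N}"
    then have v: "v < N" by simp
    show "(\<Sum>y<N. ((if y < v then 1 else 0) - (2 * real v + 1) / (2 * real N))
     * (1 - (if y < N - 1 - v then 1 else 0) - (2 * real v + 1) / (2 * real N))) =
       (real v - real (min v (N - 1 - v))) - (2 * real v + 1)^2 / (4 * real N)"
      unfolding JJ_inner[OF v] using NN by (simp add: field_simps power2_eq_square)
  qed
  also have "\<dots> = (\<Sum>v<N. real v - real (min v (N - 1 - v))) - (\<Sum>v<N. (2 * real v + 1)^2) / (4 * real N)"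
    by (simp add: sum_subtractf sum_divide_distrib)
  finally show ?thesis .
qed

lemma sum_odd_sq: "(\<Sum>v<N. (2 * real v + 1)^2) = real N * (4 * (real N)^2 - 1) / 3"
  by (induction N) (auto simp: field_simps power2_eq_square)

lemma sum_minpart: "(\<Sum>v<2*M. real v - real (min v (2*M - 1 - v))) = (real M)^2"
proof -
  have "(\<Sum>v<2*M. real v - real (min v (2*M - 1 - v))) =
     (\<Sum>v<M. (real v - real (min v (2*M - 1 - v))) + (real (2*M-1-v) - real (min (2*M-1-v) (2*M - 1 - (2*M-1-v)))))"
    by (rule sum_refl)
  also have "\<dots> = (\<Sum>v<M. 2 * real M - 1 - 2 * real v)"
  proof (rule sum.cong[OF refl])
    fix v assume "v \<in> {..<M}"
    then have v: "v < M" by simp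
    have a: "min v (2*M - 1 - v) = v" using v by simp
    have b: "2*M - 1 - (2*M-1-v) = v" using v by simp
    have c: "min (2*M-1-v) v = v" using v by simp
    show "(real v - real (min v (2*M - 1 - v))) + (real (2*M-1-v) - real (min (2*M-1-v) (2*M - 1 - (2*M-1-v)))) = 2 * real M - 1 - 2 * real v"
      unfolding a b c using v by (simp add: of_nat_diff)
  qed
  also have "\<dots> = real M * (2 * real M - 1) - 2 * (real M * (real M - 1) / 2)"
    by (simp add: sum_subtractf sum_distrib_left[symmetric] sum_real)
  also have "\<dots> = (real M)^2" by (simp add: field_simps power2_eq_square)
  finally show ?thesis .
qed

lemma JJ_closed: "JJ s = (if length s = 0 then -1/4 else (1 - (real ((2::nat)^length s))^2) / 12)"
proof (cases "length s")
  case 0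
  then show ?thesis unfolding JJ_swap by simp
next
  case (Suc L)
  let ?M = "(2::nat)^L"
  have N: "(2::nat)^length s = 2 * ?M" using Suc by simp
  have "JJ s = (\<Sum>v<2*?M. real v - real (min v (2*?M - 1 - v))) - (\<Sum>v<2*?M. (2 * real v + 1)^2) / (4 * real (2*?M))"
    unfolding JJ_swap N by (rule JJ_gen) simp
  also have "\<dots> = (real ?M)^2 - (real (2*?M) * (4 * (real (2*?M))^2 - 1) / 3) / (4 * real (2*?M))"
    by (simp only: sum_minpart sum_odd_sq)
  also have "\<dots> = (1 - (real (2 * ?M))^2) / 12"
    by (simp add: field_simps power2_eq_square)
  finally show ?thesis using Suc N by simp
qed

lemma KK_Nil: "KK [] = 0" unfolding KK_def GG_def AA_def by simp
lemma SS_Nil: "SS [] = 0" unfolding SS_def GG_def AA_def by simp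

lemma closed_forms:
  "s \<noteq> [] \<Longrightarrow> (KK s = 0 - (real ((2::nat)^length s))^2 / 24 - 1/12)
      \<and> (SS s = (real ((2::nat)^length s))^2 * (real (length s) / 24 + 5/72) + 1/18)"
proof (induction s)
  case Nil then show ?case by simp
next
  case (Cons c s)
  show ?case
  proof (cases "s = []")
    case True
    then show ?thesis
      by (simp add: KK_cons SS_cons KK_Nil SS_Nil JJ_closed HH_closed)
  next
    case False
    with Cons.IH have IH: "KK s = 0 - (real ((2::nat)^length s))^2 / 24 - 1/12"
      "SS s = (real ((2::nat)^length s))^2 * (real (length s) / 24 + 5/72) + 1/18" by auto
    have J: "JJ s = (1 - (real ((2::nat)^length s))^2) / 12" using False by (simp add: JJ_closed)
    show ?thesis
      unfolding KK_cons SS_cons IH J HH_closed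
      by (simp add: field_simps power2_eq_square)
  qed
qed

lemma SS_bounds: "real (length s) / 24 * (real ((2::nat)^length s))^2 \<le> SS s \<and>
   SS s \<le> real (length s) / 24 * (real ((2::nat)^length s))^2 + (real ((2::nat)^length s))^2"
proof (cases "s = []")
  case True then show ?thesis by (simp add: SS_Nil)
next
  case False
  define X where "X = (real ((2::nat)^length s))^2"
  have p: "1 \<le> X" unfolding X_def by simp
  have e: "SS s = real (length s) / 24 * X + X * (5/72) + 1/18"
    using closed_forms[OF False] unfolding X_def by (simp add: algebra_simps)
  show ?thesis unfolding X_def[symmetric] e using p by linarith
qed

fun kk :: "bool list \<Rightarrow> nat" where
  "kk [] = 0"
| "kk (b#t) = (if b then 1 else 0) + 2 * kk t"

lemma sum_shift1: "(\<Sum>j=1..Suc m. g j) = g 1 + (\<Sum>j=1..m. g (Suc j))"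
proof -
  have "(\<Sum>j=1..Suc m. g j) = g 1 + (\<Sum>j=Suc 1..Suc m. g j)"
    by (rule sum.atLeast_Suc_atMost) simp
  also have "(\<Sum>j=Suc 1..Suc m. g j) = (\<Sum>j=1..m. g (Suc j))"
    by (rule sum.shift_bounds_cl_Suc_ivl)
  finally show ?thesis .
qed

lemma fst_hp: "length t = m \<Longrightarrow>
  (\<Sum>j=1..m. (if t ! (j - 1) then 1 else 0) / 2 ^ (m + 1 - j)) = real (kk t) / 2^m"
proof (induction t arbitrary: m)
  case Nil then show ?case by simp
next
  case (Cons b t)
  then obtain m' where m: "m = Suc m'" and lt: "length t = m'" by auto
  have "(\<Sum>j=1..m. (if (b#t) ! (j - 1) then 1 else 0) / 2 ^ (m + 1 - j) :: real)
     = (if b then 1 else 0) / 2^(Suc m') + (\<Sum>j=1..m'. (if t ! (j - 1) then 1 else 0) / 2 ^ (m' + 1 - j))"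
    unfolding m sum_shift1
  proof -
    have "(\<Sum>j=1..m'. (if (b#t) ! (Suc j - 1) then 1 else 0) / 2 ^ (Suc m' + 1 - Suc j) :: real)
        = (\<Sum>j=1..m'. (if t ! (j - 1) then 1 else 0) / 2 ^ (m' + 1 - j))"
      by (rule sum.cong) (auto simp: nth_Cons')
    then show "(if (b # t) ! (1 - 1) then 1 else 0) / 2 ^ (Suc m' + 1 - 1) +
        (\<Sum>j = 1..m'. (if (b # t) ! (Suc j - 1) then 1 else 0) / 2 ^ (Suc m' + 1 - Suc j) :: real) =
        (if b then 1 else 0) / 2 ^ Suc m' + (\<Sum>j = 1..m'. (if t ! (j - 1) then 1 else 0) / 2 ^ (m' + 1 - j))"
      by simp
  qed
  also have "\<dots> = real (kk (b#t)) / 2^m" unfolding Cons.IH[OF lt] m by (simp add: field_simps)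
  finally show ?case .
qed

lemma snd_hp: "length t = m \<Longrightarrow> length s = m \<Longrightarrow>
  (\<Sum>j=1..m. (if t ! (j - 1) \<noteq> s ! (j - 1) then 1 else 0) / 2 ^ j) = real (pp s (kk t)) / 2^m"
proof (induction t arbitrary: m s)
  case Nil then show ?case by simp
next
  case (Cons b t)
  then obtain m' c s' where m: "m = Suc m'" and lt: "length t = m'" and s: "s = c#s'" and ls: "length s' = m'"
    by (cases s) auto
  have "(\<Sum>j=1..m. (if (b#t) ! (j - 1) \<noteq> s ! (j - 1) then 1 else 0) / 2 ^ j :: real)
     = (if b \<noteq> c then 1 else 0) / 2 + (\<Sum>j=1..m'. (if t ! (j - 1) \<noteq> s' ! (j - 1) then 1 else 0) / 2 ^ j) / 2"
    unfolding m s sum_shift1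
  proof -
    have "(\<Sum>j=1..m'. (if (b#t) ! (Suc j - 1) \<noteq> (c#s') ! (Suc j - 1) then 1 else 0) / 2 ^ (Suc j) :: real)
        = (\<Sum>j=1..m'. (if t ! (j - 1) \<noteq> s' ! (j - 1) then 1 else 0) / 2 ^ j) / 2"
      unfolding sum_divide_distrib by (rule sum.cong) (auto simp: nth_Cons')
    then show "(if (b # t) ! (1 - 1) \<noteq> (c # s') ! (1 - 1) then 1 else 0) / 2 ^ 1 +
        (\<Sum>j = 1..m'. (if (b # t) ! (Suc j - 1) \<noteq> (c # s') ! (Suc j - 1) then 1 else 0) / 2 ^ Suc j :: real) =
        (if b \<noteq> c then 1 else 0) / 2 + (\<Sum>j = 1..m'. (if t ! (j - 1) \<noteq> s' ! (j - 1) then 1 else 0) / 2 ^ j) / 2"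
      by simp
  qed
  also have "\<dots> = real (pp s (kk (b#t))) / 2^m"
    unfolding Cons.IH[OF lt ls] m s using ls by (auto simp: field_simps)
  finally show ?case .
qed

lemma hp_eq:
  assumes "length t = m" "length s = m"
  shows "hammersley_point m s t = (real (kk t) / 2^m, real (pp s (kk t)) / 2^m)"
  unfolding hammersley_point_def by (simp only: fst_hp[OF assms(1)] snd_hp[OF assms])

lemma sum_list_map_concat: "sum_list (map f (concat xss)) = sum_list (map (\<lambda>xs. sum_list (map f xs)) xss)"
  by (induction xss) auto

lemma sum_nlists: "sum_list (map (\<lambda>t. F (kk t)) (List.n_lists m [False, True])) = (\<Sum>k<2^m. F k :: real)"
proof (induction m arbitrary: F)
  case 0 then show ?case by simp
next
  case (Suc m)
  have "sum_list (map (\<lambda>t. F (kk t)) (List.n_lists (Suc m) [False, True]))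
      = sum_list (map (\<lambda>t. F (2 * kk t) + F (1 + 2 * kk t)) (List.n_lists m [False, True]))"
    by (simp add: sum_list_map_concat comp_def)
  also have "\<dots> = (\<Sum>k<2^m. F (2*k) + F (1 + 2*k))" by (rule Suc.IH)
  also have "\<dots> = (\<Sum>k<2^Suc m. F k)"
    using sum_even_odd[of F "2^m"] by (simp add: add.commute)
  finally show ?case .
qed

definition DD :: "bool list \<Rightarrow> real \<Rightarrow> real \<Rightarrow> real" where
  "DD s a b = (\<Sum>k<2^length s. (if real k < real (2^length s) * a \<and> real (pp s k) < real (2^length s) * b then 1 else 0)
        + (if real k < real (2^length s) * a \<and> real (2^length s) - real (pp s k) < real (2^length s) * b then 1 else 0))
     - 2 * real (2^length s) * a * b"

lemma real_length_filter: "real (length (filter P xs)) = sum_list (map (\<lambda>x. if P x then 1 else 0) xs)"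
  by (induction xs) auto

lemma local_disc_eq:
  assumes "length s = m"
  shows "local_disc a b (sym_hammersley m s) = DD s a b"
proof -
  let ?N = "(2::nat)^m"
  let ?ts = "List.n_lists m [False, True]"
  let ?P = "\<lambda>x::real\<times>real. 0 \<le> fst x \<and> fst x < a \<and> 0 \<le> snd x \<and> snd x < b"
  have Npos: "(0::real) < 2^m" by simp
  have len: "length (sym_hammersley m s) = 2 * ?N"
    unfolding sym_hammersley_def shifted_hammersley_def by (simp add: length_n_lists mult_2 numeral_2_eq_2)
  have hp: "\<And>t. t \<in> set ?ts \<Longrightarrow> hammersley_point m s t = (real (kk t) / 2^m, real (pp s (kk t)) / 2^m)"
    using hp_eq assms by (simp add: length_n_lists_elem)
  have c1: "\<And>k. (if ?P (real k / 2^m, real (pp s k) / 2^m) then 1 else 0) =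
     (if real k < real ?N * a \<and> real (pp s k) < real ?N * b then 1 else (0::real))"
    using Npos by (simp add: divide_less_eq mult.commute)
  have c2: "\<And>k. (if ?P (real k / 2^m, 1 - real (pp s k) / 2^m) then 1 else 0) =
     (if real k < real ?N * a \<and> real ?N - real (pp s k) < real ?N * b then 1 else (0::real))"
  proof -
    fix k
    have lt: "real (pp s k) < 2^m" using pp_less[of s k] assms
      by (metis of_nat_less_iff of_nat_numeral of_nat_power)
    have "0 \<le> 1 - real (pp s k) / 2^m" using lt Npos by (simp add: field_simps)
    moreover have "(1 - real (pp s k) / 2^m < b) = (real ?N - real (pp s k) < real ?N * b)"
      using Npos by (simp add: field_simps)
    ultimately show "(if ?P (real k / 2^m, 1 - real (pp s k) / 2^m) then 1 else 0) =
     (if real k < real ?N * a \<and> real ?N - real (pp s k) < real ?N * b then 1 else (0::real))"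
      using Npos by (simp add: divide_less_eq mult.commute)
  qed
  have "real (count_box a b (sym_hammersley m s)) =
     sum_list (map (\<lambda>t. (if ?P (hammersley_point m s t) then 1 else 0)) ?ts)
     + sum_list (map (\<lambda>t. (if ?P ((\<lambda>(x, y). (x, 1 - y)) (hammersley_point m s t)) then 1 else 0)) ?ts)"
    unfolding count_box_def sym_hammersley_def shifted_hammersley_def real_length_filter
    by (simp add: comp_def)
  also have "\<dots> = sum_list (map (\<lambda>t. (if ?P (real (kk t) / 2^m, real (pp s (kk t)) / 2^m) then 1 else 0)) ?ts)
     + sum_list (map (\<lambda>t. (if ?P (real (kk t) / 2^m, 1 - real (pp s (kk t)) / 2^m) then 1 else 0)) ?ts)"
    by (simp add: hp cong: map_cong)
  also have "\<dots> = (\<Sum>k<?N. (if ?P (real k / 2^m, real (pp s k) / 2^m) then 1 else 0))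
      + (\<Sum>k<?N. (if ?P (real k / 2^m, 1 - real (pp s k) / 2^m) then 1 else 0))"
    by (simp only: sum_nlists[of "\<lambda>k. if ?P (real k / 2^m, real (pp s k) / 2^m) then 1 else 0" m]
           sum_nlists[of "\<lambda>k. if ?P (real k / 2^m, 1 - real (pp s k) / 2^m) then 1 else 0" m])
  also have "\<dots> = (\<Sum>k<?N. (if real k < real ?N * a \<and> real (pp s k) < real ?N * b then 1 else 0)
        + (if real k < real ?N * a \<and> real ?N - real (pp s k) < real ?N * b then 1 else 0))"
    by (simp only: c1 c2 sum.distrib)
  finally have cnt: "real (count_box a b (sym_hammersley m s)) = \<dots>" .
  show ?thesis unfolding local_disc_def DD_def cnt len assms by simp
qed

lemma sum_if_card: "finite A \<Longrightarrow> (\<Sum>k\<in>A. if Q k then 1 else 0 :: real) = real (card {k\<in>A. Q k})"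
  by (simp add: sum.inter_filter[symmetric])

lemma AA_mono_step: "AA s U w \<le> AA s U (Suc w)"
  unfolding AA_def by (rule card_mono) auto

lemma AA_step:
  assumes "U \<le> 2^length s"
  shows "AA s U (Suc w) \<le> AA s U w + 1"
proof -
  have e: "{k. k < U \<and> pp s k < Suc w} = {k. k < U \<and> pp s k < w} \<union> {k. k < U \<and> pp s k = w}" by auto
  have "card {k. k < U \<and> pp s k = w} \<le> Suc 0"
  proof (subst card_le_Suc0_iff_eq)
    show "finite {k. k < U \<and> pp s k = w}" by simp
    show "\<forall>x\<in>{k. k < U \<and> pp s k = w}. \<forall>y\<in>{k. k < U \<and> pp s k = w}. x = y"
      using pp_inj[of s] assms by (auto simp: inj_on_def)
  qed
  moreover have "card ({k. k < U \<and> pp s k < w} \<union> {k. k < U \<and> pp s k = w}) \<le> card {k. k < U \<and> pp s k < w} + card {k. k < U \<and> pp s k = w}"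
    by (rule card_Un_le)
  ultimately show ?thesis unfolding AA_def e by linarith
qed

definition gg :: "bool list \<Rightarrow> real \<times> real \<Rightarrow> real" where
  "gg s x = (if snd x \<le> 0 then 0 else GG s (nat \<lceil>real (2^length s) * fst x\<rceil>) (nat \<lceil>real (2^length s) * snd x\<rceil> - 1))"

lemma ceil_facts:
  fixes N :: nat and a :: real
  assumes N: "N > 0" and a0: "0 \<le> a" and a1: "a \<le> 1"
  shows "nat \<lceil>real N * a\<rceil> \<le> N" "real (nat \<lceil>real N * a\<rceil>) - 1 < real N * a"
    "real N * a \<le> real (nat \<lceil>real N * a\<rceil>)"
    "\<And>k::nat. (real k < real N * a) = (k < nat \<lceil>real N * a\<rceil>)"
proof -
  have "0 \<le> real N * a" using a0 by simp
  then have c0: "0 \<le> \<lceil>real N * a\<rceil>" by simp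
  have "real N * a \<le> real N" using a1 N by simp
  then have "\<lceil>real N * a\<rceil> \<le> int N" by (simp add: ceiling_le_iff)
  then show "nat \<lceil>real N * a\<rceil> \<le> N" by (simp only: nat_le_iff)
  have r: "real (nat \<lceil>real N * a\<rceil>) = real_of_int \<lceil>real N * a\<rceil>" using c0 by simp
  show "real (nat \<lceil>real N * a\<rceil>) - 1 < real N * a" unfolding r by linarith
  show "real N * a \<le> real (nat \<lceil>real N * a\<rceil>)" unfolding r by linarith
  fix k :: nat
  show "(real k < real N * a) = (k < nat \<lceil>real N * a\<rceil>)"
    using c0 by (metis less_ceiling_iff of_int_of_nat_eq zless_nat_eq_int_zless)
qed

lemma real_part_bound:
  fixes U v N :: nat and p q :: real
  assumes U: "U \<le> N" and v: "v + 1 \<le> N" and p0: "0 \<le> p" and pU: "p \<le> real U" and pU1: "real U - 1 < p"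
    and qv: "real v < q" and qv1: "q \<le> real v + 1"
  shows "- real N \<le> real U * (2 * real v + 1) - 2 * p * q \<and> real U * (2 * real v + 1) - 2 * p * q \<le> 3 * real N"
proof -
  have q0: "0 \<le> q" using qv by linarith
  have up: "p * q \<le> real U * (real v + 1)" using mult_mono[OF pU qv1] p0 q0 by simp
  have lo: "real U * real v - real v \<le> p * q"
  proof (cases "U = 0")
    case True
    then have "p = 0" using p0 pU by simp
    then show ?thesis using True by simp
  next
    case False
    then have "0 \<le> real U - 1" by simp
    have "(real U - 1) * real v \<le> p * q" using mult_mono[of "real U - 1" p "real v" q] pU1 qv p0 \<open>0 \<le> real U - 1\<close>
      by simp
    then show ?thesis by (simp add: algebra_simps)
  qed
  have "real U \<le> real N" "real v + 1 \<le> real N" using U v by simp_all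
  then show ?thesis using up lo by (simp add: algebra_simps)
qed

lemma DD_gg_bound:
  assumes x: "x \<in> cbox (0,0) (1,1)"
  shows "\<bar>DD s (fst x) (snd x) - gg s x\<bar> \<le> 5"
proof -
  obtain a b where xab: "x = (a, b)" by (cases x)
  have a0: "0 \<le> a" and a1: "a \<le> 1" and b0: "0 \<le> b" and b1: "b \<le> 1"
    using x unfolding xab by (auto simp: cbox_Pair_iff)
  let ?N = "(2::nat)^length s"
  have Npos: "?N > 0" by simp
  have ppl: "\<And>k. pp s k < ?N" by (rule pp_less)
  show ?thesis
  proof (cases "b \<le> 0")
    case True
    then have b: "b = 0" using b0 by simp
    have z: "\<And>k. (if real k < real ?N * a \<and> real (pp s k) < real ?N * b then 1 else 0)
        + (if real k < real ?N * a \<and> real ?N - real (pp s k) < real ?N * b then 1 else 0) = (0::real)"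
    proof -
      fix k
      have "real (pp s k) < real ?N" using ppl[of k] by (simp only: of_nat_less_iff)
      then have "\<not> (real (pp s k) < real ?N * b)" "\<not> (real ?N - real (pp s k) < real ?N * b)"
        unfolding b by simp_all
      then show "(if real k < real ?N * a \<and> real (pp s k) < real ?N * b then 1 else 0)
        + (if real k < real ?N * a \<and> real ?N - real (pp s k) < real ?N * b then 1 else 0) = (0::real)"
        by simp
    qed
    have "DD s a b = 0"
      unfolding DD_def by (simp only: z sum.neutral_const) (simp add: b)
    moreover have "gg s x = 0" unfolding gg_def xab using True by simp
    ultimately show ?thesis unfolding xab by simp
  next
    case False
    then have bpos: "0 < b" by simp
    define U where "U = nat \<lceil>real ?N * a\<rceil>"
    define V where "V = nat \<lceil>real ?N * b\<rceil>"
    note fa = ceil_facts[OF Npos a0 a1, folded U_def]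
    note fb = ceil_facts[OF Npos b0 b1, folded V_def]
    have "0 < real ?N * b" using bpos by simp
    then have "0 < real V" using fb(3) by linarith
    then have V1: "1 \<le> V" by simp
    define v where "v = V - 1"
    have Vv: "V = Suc v" using V1 unfolding v_def by simp
    have vN: "v + 1 \<le> ?N" using fb(1) Vv by simp
    have gg_eq: "gg s x = GG s U v" unfolding gg_def xab U_def V_def v_def using False by simp
    have p1: "(\<Sum>k<?N. (if real k < real ?N * a \<and> real (pp s k) < real ?N * b then 1 else 0) :: real) = real (AA s U V)"
    proof -
      have "(\<Sum>k<?N. (if real k < real ?N * a \<and> real (pp s k) < real ?N * b then 1 else 0) :: real)
          = (\<Sum>k<?N. (if k < U \<and> pp s k < V then 1 else 0))"
        by (simp only: fa(4) fb(4))
      also have "\<dots> = real (card {k \<in> {..<?N}. k < U \<and> pp s k < V})" by (rule sum_if_card) simp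
      also have "{k \<in> {..<?N}. k < U \<and> pp s k < V} = {k. k < U \<and> pp s k < V}" using fa(1) by auto
      finally show ?thesis unfolding AA_def .
    qed
    have p2: "(\<Sum>k<?N. (if real k < real ?N * a \<and> real ?N - real (pp s k) < real ?N * b then 1 else 0) :: real)
        = real U - real (AA s U (?N - v))"
    proof -
      have c: "\<And>k. (real ?N - real (pp s k) < real ?N * b) = (\<not> pp s k < ?N - v)"
      proof -
        fix k
        have "real ?N - real (pp s k) = real (?N - pp s k)" using ppl[of k] by (simp add: of_nat_diff)
        then have "(real ?N - real (pp s k) < real ?N * b) = (?N - pp s k < V)" using fb(4)[of "?N - pp s k"] by simp
        also have "\<dots> = (\<not> pp s k < ?N - v)" using Vv ppl[of k] vN by auto
        finally show "(real ?N - real (pp s k) < real ?N * b) = (\<not> pp s k < ?N - v)" .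
      qed
      have "(\<Sum>k<?N. (if real k < real ?N * a \<and> real ?N - real (pp s k) < real ?N * b then 1 else 0) :: real)
          = (\<Sum>k<?N. (if k < U \<and> \<not> pp s k < ?N - v then 1 else 0))"
        by (simp only: fa(4) c)
      also have "\<dots> = real (card {k \<in> {..<?N}. k < U \<and> \<not> pp s k < ?N - v})" by (rule sum_if_card) simp
      also have "{k \<in> {..<?N}. k < U \<and> \<not> pp s k < ?N - v} = {k. k < U} - {k. k < U \<and> pp s k < ?N - v}"
        using fa(1) by auto
      also have "card ({k. k < U} - {k. k < U \<and> pp s k < ?N - v}) = U - AA s U (?N - v)"
        unfolding AA_def by (subst card_Diff_subset) auto
      also have "AA s U (?N - v) \<le> U" unfolding AA_def
        using card_mono[of "{k. k < U}" "{k. k < U \<and> pp s k < ?N - v}"] by auto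
      then have "real (U - AA s U (?N - v)) = real U - real (AA s U (?N - v))" by (simp add: of_nat_diff)
      finally show ?thesis .
    qed
    have DD_eq: "DD s a b = real (AA s U V) + real U - real (AA s U (?N - v)) - 2 * real ?N * a * b"
      unfolding DD_def sum.distrib p1 p2 by simp
    have s1: "AA s U v \<le> AA s U V" "AA s U V \<le> AA s U v + 1"
      unfolding Vv using AA_mono_step AA_step[OF fa(1)] by auto
    have Nv: "?N - v = Suc (?N - 1 - v)" using vN by simp
    have s2: "AA s U (?N - 1 - v) \<le> AA s U (?N - v)" "AA s U (?N - v) \<le> AA s U (?N - 1 - v) + 1"
      unfolding Nv using AA_mono_step AA_step[OF fa(1)] by auto
    have rb: "- real ?N \<le> real U * (2 * real v + 1) - 2 * (real ?N * a) * (real ?N * b) \<and>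
        real U * (2 * real v + 1) - 2 * (real ?N * a) * (real ?N * b) \<le> 3 * real ?N"
    proof (rule real_part_bound[OF fa(1) vN])
      show "0 \<le> real ?N * a" using a0 by simp
      show "real ?N * a \<le> real U" by (rule fa(3))
      show "real U - 1 < real ?N * a" by (rule fa(2))
      show "real v < real ?N * b" using fb(2) Vv by simp
      show "real ?N * b \<le> real v + 1" using fb(3) Vv by simp
    qed
    define R where "R = real U * (2 * real v + 1) - 2 * (real ?N * a) * (real ?N * b)"
    have NR: "0 < real ?N" by simp
    have Rb: "-1 \<le> R / real ?N" "R / real ?N \<le> 3"
      using rb NR unfolding R_def by (simp_all add: divide_le_eq le_divide_eq)
    have GG_eq: "GG s U v = real (AA s U v) - real (AA s U (?N - 1 - v)) + real U * (real ?N - 1 - 2 * real v) / real ?N"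
      unfolding GG_def by simp
    have key: "real U - real U * (real ?N - 1 - 2 * real v) / real ?N - 2 * real ?N * a * b = R / real ?N"
      unfolding R_def using NR by (simp add: field_simps)
    have "DD s (fst x) (snd x) - gg s x = (real (AA s U V) - real (AA s U v)) - (real (AA s U (?N - v)) - real (AA s U (?N - 1 - v)))
        + (real U - real U * (real ?N - 1 - 2 * real v) / real ?N - 2 * real ?N * a * b)"
    proof -
      have "DD s (fst x) (snd x) = DD s a b" by (simp add: xab)
      then show ?thesis unfolding gg_eq DD_eq GG_eq by simp
    qed
    also have "\<dots> = (real (AA s U V) - real (AA s U v)) - (real (AA s U (?N - v)) - real (AA s U (?N - 1 - v))) + R / real ?N"
      by (simp only: key)
    finally have e: "DD s (fst x) (snd x) - gg s x = (real (AA s U V) - real (AA s U v)) - (real (AA s U (?N - v)) - real (AA s U (?N - 1 - v))) + R / real ?N" .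
    have "real (AA s U v) \<le> real (AA s U V)" "real (AA s U V) \<le> real (AA s U v) + 1"
      "real (AA s U (?N - 1 - v)) \<le> real (AA s U (?N - v))" "real (AA s U (?N - v)) \<le> real (AA s U (?N - 1 - v)) + 1"
      using s1 s2 by simp_all
    then show ?thesis unfolding e using Rb by linarith
  qed
qed

lemma box_integral:
  fixes a b c d :: real
  assumes "0 \<le> a" "a \<le> b" "b \<le> 1" "0 \<le> c" "c \<le> d" "d \<le> 1"
  shows "((\<lambda>x::real\<times>real. if a < fst x \<and> fst x \<le> b \<and> c < snd x \<and> snd x \<le> d then 1 else 0)
          has_integral ((b - a) * (d - c))) (cbox (0,0) (1,1))"
proof -
  have sub: "cbox (a,c) (b,d) \<subseteq> cbox (0::real,0::real) (1,1)" using assms by (auto simp: cbox_Pair_iff)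
  have "((\<lambda>x::real\<times>real. 1::real) has_integral (Henstock_Kurzweil_Integration.content (cbox (a,c) (b,d)) *\<^sub>R 1)) (cbox (a,c) (b,d))"
    by (rule has_integral_const)
  moreover have "Henstock_Kurzweil_Integration.content (cbox (a,c) (b,d)) = (b - a) * (d - c)"
    using assms by (simp add: content_Pair)
  ultimately have "((\<lambda>x::real\<times>real. 1::real) has_integral ((b - a) * (d - c))) (cbox (a,c) (b,d))" by simp
  then have I: "((\<lambda>x::real\<times>real. if x \<in> cbox (a,c) (b,d) then 1 else 0::real) has_integral ((b - a) * (d - c))) (cbox (0,0) (1,1))"
    by (rule has_integral_restrict[OF sub, THEN iffD2])
  have neg: "negligible ({x::real\<times>real. (1,0) \<bullet> x = a} \<union> {x. (0,1) \<bullet> x = c})"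
    by (intro negligible_Un negligible_hyperplane) (auto simp: zero_prod_def)
  show ?thesis
  proof (rule has_integral_spike[OF neg _ I])
    fix x :: "real \<times> real" assume "x \<in> cbox (0,0) (1,1) - ({x. (1,0) \<bullet> x = a} \<union> {x. (0,1) \<bullet> x = c})"
    then have "fst x \<noteq> a" "snd x \<noteq> c" by (cases x, auto simp: inner_Pair)+
    then show "(if a < fst x \<and> fst x \<le> b \<and> c < snd x \<and> snd x \<le> d then 1 else 0) = (if x \<in> cbox (a,c) (b,d) then 1 else 0::real)"
      by (cases x) (auto simp: cbox_Pair_iff)
  qed
qed

lemma AA_full:
  assumes "w \<le> 2^length s"
  shows "AA s (2^length s) w = w"
proof -
  let ?N = "(2::nat)^length s"
  have inj: "inj_on (pp s) {k. k < ?N \<and> pp s k < w}" using pp_inj by (rule inj_on_subset) auto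
  have "pp s ` {k. k < ?N \<and> pp s k < w} = {..<w}"
  proof
    show "pp s ` {k. k < ?N \<and> pp s k < w} \<subseteq> {..<w}" by auto
    show "{..<w} \<subseteq> pp s ` {k. k < ?N \<and> pp s k < w}"
    proof
      fix y assume "y \<in> {..<w}"
      then have "y \<in> {..<?N}" "y < w" using assms by auto
      then obtain k where "k \<in> {..<?N}" "pp s k = y" using pp_bij[of s] by (metis bij_betw_imp_surj_on imageE)
      then show "y \<in> pp s ` {k. k < ?N \<and> pp s k < w}" using \<open>y < w\<close> by auto
    qed
  qed
  then have "card {k. k < ?N \<and> pp s k < w} = card {..<w}" using card_image[OF inj] by simp
  then show ?thesis unfolding AA_def by simp
qed

lemma GG_zero: "GG s 0 v = 0"
  unfolding GG_def AA_def by simp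

lemma GG_full:
  assumes "v < 2^length s"
  shows "GG s (2^length s) v = 0"
proof -
  let ?N = "(2::nat)^length s"
  have e1: "real (AA s ?N v) = real v" using assms by (simp add: AA_full)
  have "AA s ?N (?N - 1 - v) = ?N - 1 - v" using assms by (simp add: AA_full)
  then have e2: "real (AA s ?N (?N - 1 - v)) = real ?N - 1 - real v" using assms by (simp add: of_nat_diff)
  have p: "(0::real) < real ?N" by simp
  show ?thesis unfolding GG_def e1 e2 using p by (simp add: field_simps)
qed

lemma SS_shift: "(\<Sum>U\<in>{1..2^length s}. \<Sum>v<2^length s. (GG s U v)^2) = SS s"
proof -
  let ?N = "(2::nat)^length s"
  let ?f = "\<lambda>U. \<Sum>v<?N. (GG s U v)^2"
  have "{1..?N} = Suc ` {..<?N}" by (auto simp: image_iff) (metis Suc_pred' less_Suc_eq_le not_le not_less_eq_eq lessThan_iff)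
  then have "(\<Sum>U\<in>{1..?N}. ?f U) = (\<Sum>u<?N. ?f (Suc u))" by (simp add: sum.reindex)
  also have "\<dots> = (\<Sum>u<Suc ?N. ?f u) - ?f 0"
    using sum.lessThan_Suc_shift[of ?f ?N] by simp
  also have "\<dots> = (\<Sum>u<?N. ?f u) + ?f ?N - ?f 0" by simp
  also have "?f ?N = 0" by (simp add: GG_full)
  also have "?f 0 = 0" by (simp add: GG_zero)
  finally show ?thesis unfolding SS_def by simp
qed

definition cell :: "nat \<Rightarrow> nat \<Rightarrow> nat \<Rightarrow> real \<times> real \<Rightarrow> real" where
  "cell N U V x = (if (real U - 1) / real N < fst x \<and> fst x \<le> real U / real N
       \<and> (real V - 1) / real N < snd x \<and> snd x \<le> real V / real N then 1 else 0)"

lemma cell_iff1: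
  fixes N :: nat and t :: real
  assumes "N > 0"
  shows "((real k - 1) / real N < t \<and> t \<le> real k / real N) = (\<lceil>real N * t\<rceil> = int k)"
proof -
  have p: "(0::real) < real N" using assms by simp
  show ?thesis unfolding ceiling_eq_iff using p
    by (simp add: divide_less_eq le_divide_eq mult.commute)
qed

lemma cell_integral:
  assumes "1 \<le> U" "U \<le> N" "1 \<le> V" "V \<le> N"
  shows "(cell N U V has_integral (1 / (real N)^2)) (cbox (0,0) (1,1))"
proof -
  have p: "(0::real) < real N" using assms by simp
  have "(cell N U V has_integral ((real U / real N - (real U - 1) / real N) * (real V / real N - (real V - 1) / real N))) (cbox (0,0) (1,1))"
    unfolding cell_def
    by (rule box_integral) (use assms p in \<open>auto simp: divide_le_eq le_divide_eq\<close>)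
  moreover have "(real U / real N - (real U - 1) / real N) * (real V / real N - (real V - 1) / real N) = 1 / (real N)^2"
    using p by (simp add: field_simps power2_eq_square)
  ultimately show ?thesis by simp
qed

lemma double_delta:
  assumes "finite A" "finite B"
  shows "(\<Sum>U\<in>A. \<Sum>v\<in>B. (if U = U0 \<and> v = v0 then g U v else 0)) = (if U0 \<in> A \<and> v0 \<in> B then g U0 v0 else (0::real))"
proof -
  have "(\<Sum>U\<in>A. \<Sum>v\<in>B. (if U = U0 \<and> v = v0 then g U v else 0)) = (\<Sum>U\<in>A. if U = U0 then (\<Sum>v\<in>B. if v = v0 then g U v else 0) else 0)"
    by (rule sum.cong) auto
  also have "\<dots> = (if U0 \<in> A then (\<Sum>v\<in>B. if v = v0 then g U0 v else 0) else 0)"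
    using assms by (simp add: sum.delta)
  also have "\<dots> = (if U0 \<in> A \<and> v0 \<in> B then g U0 v0 else 0)"
    using assms by (simp add: sum.delta)
  finally show ?thesis .
qed

lemma gg_sq_cells:
  assumes x: "x \<in> cbox (0,0) (1,1)"
  shows "(gg s x)^2 = (\<Sum>U\<in>{1..2^length s}. \<Sum>v<2^length s. (GG s U v)^2 * cell (2^length s) U (Suc v) x)"
proof -
  let ?N = "(2::nat)^length s"
  obtain a b where xab: "x = (a, b)" by (cases x)
  have a0: "0 \<le> a" and a1: "a \<le> 1" and b0: "0 \<le> b" and b1: "b \<le> 1"
    using x unfolding xab by (auto simp: cbox_Pair_iff)
  have Npos: "?N > 0" by simp
  have p: "(0::real) < real ?N" by simp
  show ?thesis
  proof (cases "b \<le> 0 \<or> a \<le> 0")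
    case True
    have z: "\<And>U v. U \<in> {1..?N} \<Longrightarrow> cell ?N U (Suc v) x = 0"
    proof -
      fix U v assume U: "U \<in> {1..?N}"
      have "\<not> ((real U - 1) / real ?N < a \<and> (real (Suc v) - 1) / real ?N < b)"
      proof
        assume h: "(real U - 1) / real ?N < a \<and> (real (Suc v) - 1) / real ?N < b"
        have "0 \<le> (real U - 1) / real ?N" "0 \<le> (real (Suc v) - 1) / real ?N" using U p by auto
        then show False using h True by linarith
      qed
      then show "cell ?N U (Suc v) x = 0" unfolding cell_def xab by auto
    qed
    have "gg s x = 0"
    proof (cases "b \<le> 0")
      case True then show ?thesis unfolding gg_def xab by simp
    next
      case False
      then have "a \<le> 0" using \<open>b \<le> 0 \<or> a \<le> 0\<close> by simp
      then have "a = 0" using a0 by simp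
      then show ?thesis unfolding gg_def xab using GG_zero by simp
    qed
    then show ?thesis using z by simp
  next
    case False
    then have apos: "0 < a" and bpos: "0 < b" by auto
    define U0 where "U0 = nat \<lceil>real ?N * a\<rceil>"
    define V0 where "V0 = nat \<lceil>real ?N * b\<rceil>"
    have pa: "0 < real ?N * a" using apos by simp
    have pb: "0 < real ?N * b" using bpos by simp
    have pa': "0 < \<lceil>real ?N * a\<rceil>" using pa by simp
    have pb': "0 < \<lceil>real ?N * b\<rceil>" using pb by simp
    have ca: "\<lceil>real ?N * a\<rceil> = int U0" unfolding U0_def using pa' by simp
    have cb: "\<lceil>real ?N * b\<rceil> = int V0" unfolding V0_def using pb' by simp
    have U01: "1 \<le> U0" using ca pa' by simp
    have V01: "1 \<le> V0" using cb pb' by simp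
    have U0N: "U0 \<le> ?N" using ceil_facts(1)[OF Npos a0 a1] unfolding U0_def .
    have V0N: "V0 \<le> ?N" using ceil_facts(1)[OF Npos b0 b1] unfolding V0_def .
    have gg_eq: "gg s x = GG s U0 (V0 - 1)" unfolding gg_def xab U0_def V0_def using bpos by simp
    have cellq: "\<And>U v. cell ?N U (Suc v) x = (if U = U0 \<and> v = V0 - 1 then 1 else 0)"
    proof -
      fix U v
      have "((real U - 1) / real ?N < a \<and> a \<le> real U / real ?N) = (U = U0)"
        unfolding cell_iff1[OF Npos] ca by auto
      moreover have "((real (Suc v) - 1) / real ?N < b \<and> b \<le> real (Suc v) / real ?N) = (v = V0 - 1)"
        unfolding cell_iff1[OF Npos] cb using V01 by auto
      ultimately show "cell ?N U (Suc v) x = (if U = U0 \<and> v = V0 - 1 then 1 else 0)"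
        unfolding cell_def xab by auto
    qed
    have "(\<Sum>U\<in>{1..?N}. \<Sum>v<?N. (GG s U v)^2 * cell ?N U (Suc v) x)
        = (\<Sum>U\<in>{1..?N}. \<Sum>v<?N. (if U = U0 \<and> v = V0 - 1 then (GG s U v)^2 else 0))"
      unfolding cellq by (rule sum.cong[OF refl], rule sum.cong[OF refl]) simp
    also have "\<dots> = (GG s U0 (V0 - 1))^2"
      using U01 U0N V01 V0N by (subst double_delta) auto
    finally show ?thesis unfolding gg_eq by simp
  qed
qed

lemma gg_sq_integral:
  "((\<lambda>x. (gg s x)^2) has_integral (SS s / (real ((2::nat)^length s))^2)) (cbox (0,0) (1,1))"
proof -
  let ?N = "(2::nat)^length s"
  have I: "((\<lambda>x. \<Sum>U\<in>{1..?N}. \<Sum>v<?N. (GG s U v)^2 * cell ?N U (Suc v) x) has_integral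
      (\<Sum>U\<in>{1..?N}. \<Sum>v<?N. (GG s U v)^2 * (1 / (real ?N)^2))) (cbox (0,0) (1,1))"
  proof (rule has_integral_sum, simp)
    fix U assume U: "U \<in> {1..?N}"
    show "((\<lambda>x. \<Sum>v<?N. (GG s U v)^2 * cell ?N U (Suc v) x) has_integral (\<Sum>v<?N. (GG s U v)^2 * (1 / (real ?N)^2))) (cbox (0,0) (1,1))"
    proof (rule has_integral_sum, simp)
      fix v assume v: "v \<in> {..<?N}"
      show "((\<lambda>x. (GG s U v)^2 * cell ?N U (Suc v) x) has_integral (GG s U v)^2 * (1 / (real ?N)^2)) (cbox (0,0) (1,1))"
        by (rule has_integral_cmult_real, rule cell_integral) (use U v in auto)
    qed
  qed
  have "(\<Sum>U\<in>{1..?N}. \<Sum>v<?N. (GG s U v)^2 * (1 / (real ?N)^2)) = SS s / (real ?N)^2"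
    unfolding SS_shift[symmetric] by (simp add: sum_divide_distrib)
  with I have I2: "((\<lambda>x. \<Sum>U\<in>{1..?N}. \<Sum>v<?N. (GG s U v)^2 * cell ?N U (Suc v) x) has_integral (SS s / (real ?N)^2)) (cbox (0,0) (1,1))"
    by simp
  show ?thesis
    by (rule has_integral_eq[OF _ I2]) (simp add: gg_sq_cells)
qed

lemma bdd_meas_integrable:
  fixes f :: "real \<times> real \<Rightarrow> real"
  assumes m: "f \<in> borel_measurable borel" and b: "\<And>x. x \<in> cbox a c \<Longrightarrow> \<bar>f x\<bar> \<le> B"
  shows "f integrable_on cbox a c"
proof -
  have fm: "finite_measure (lebesgue_on (cbox a c))" by (rule finite_measure_lebesgue_on) simp
  have m1: "f \<in> borel_measurable lebesgue"
    using m by (intro measurable_completion) simp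
  have m2: "f \<in> borel_measurable (lebesgue_on (cbox a c))"
    using m1 by (rule measurable_restrict_space1)
  have ae: "AE x in lebesgue_on (cbox a c). norm (f x) \<le> B"
    by (rule AE_I2) (simp add: b)
  have "integrable (lebesgue_on (cbox a c)) f"
    by (rule finite_measure.integrable_const_bound[OF fm ae m2])
  then show ?thesis by (rule integrable_on_lebesgue_on) simp
qed

lemma fst_meas [measurable]: "(\<lambda>x::real\<times>real. fst x) \<in> borel_measurable borel"
  by (intro borel_measurable_continuous_onI continuous_intros)
lemma snd_meas [measurable]: "(\<lambda>x::real\<times>real. snd x) \<in> borel_measurable borel"
  by (intro borel_measurable_continuous_onI continuous_intros)

lemma DD_meas: "(\<lambda>x. (DD s (fst x) (snd x))^2) \<in> borel_measurable borel"
  unfolding DD_def by measurable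

lemma DD_bound: "\<bar>DD s a b\<bar> \<le> 2 * real (2^length s) + 2 * real (2^length s) * \<bar>a\<bar> * \<bar>b\<bar>"
proof -
  let ?N = "(2::nat)^length s"
  let ?S = "(\<Sum>k<?N. (if real k < real ?N * a \<and> real (pp s k) < real ?N * b then 1 else 0)
        + (if real k < real ?N * a \<and> real ?N - real (pp s k) < real ?N * b then 1 else 0)) :: real"
  have "\<bar>?S\<bar> \<le> (\<Sum>k<?N. 2::real)"
    by (rule order_trans[OF sum_abs], rule sum_mono) auto
  then have S: "\<bar>?S\<bar> \<le> 2 * real ?N" by simp
  have "\<bar>DD s a b\<bar> \<le> \<bar>?S\<bar> + \<bar>2 * real ?N * a * b\<bar>" unfolding DD_def by (rule abs_triangle_ineq4)
  also have "\<bar>2 * real ?N * a * b\<bar> = 2 * real ?N * \<bar>a\<bar> * \<bar>b\<bar>" by (simp add: abs_mult)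
  finally show ?thesis using S by linarith
qed

lemma sqrt_compare:
  fixes A B :: real
  assumes A: "0 \<le> A" and B: "0 \<le> B" and h: "\<And>l. l > 0 \<Longrightarrow> A \<le> (1 + l) * B + (1 + 1 / l) * 25"
  shows "sqrt A \<le> sqrt B + 8"
proof (cases "B \<ge> 1")
  case True
  define r where "r = sqrt B"
  have r1: "1 \<le> r" unfolding r_def using True by simp
  have rB: "r * r = B" unfolding r_def using B by simp
  have "A \<le> (1 + 5 / r) * B + (1 + 1 / (5 / r)) * 25" using h[of "5 / r"] r1 by simp
  also have "\<dots> = (r + 5)^2" using r1 rB by (simp add: field_simps power2_eq_square)
  finally have "sqrt A \<le> sqrt ((r + 5)^2)" by (rule real_sqrt_le_mono)
  also have "\<dots> = r + 5" using r1 by simp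
  finally show ?thesis unfolding r_def by simp
next
  case False
  have "A \<le> (1 + 1) * B + (1 + 1 / 1) * 25" using h[of 1] by simp
  then have "A \<le> 8^2" using False by simp
  then have "sqrt A \<le> sqrt (8^2)" by (rule real_sqrt_le_mono)
  then have "sqrt A \<le> 8" by simp
  moreover have "0 \<le> sqrt B" using B by simp
  ultimately show ?thesis by linarith
qed

lemma young_sq:
  fixes g e l :: real
  assumes l: "l > 0" and e: "\<bar>e\<bar> \<le> 5"
  shows "(g + e)^2 \<le> (1 + l) * g^2 + (1 + 1 / l) * 25"
proof -
  have "0 \<le> (l * g - e)^2" by simp
  then have "2 * g * e \<le> l * g^2 + e^2 / l" using l
    by (simp add: field_simps power2_eq_square)
  moreover have "\<bar>e\<bar>^2 \<le> 5^2" using e by (rule power_mono) simp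
  then have e2: "e^2 \<le> 25" by simp
  moreover have "e^2 / l \<le> 25 / l" using e2 l by (simp add: divide_right_mono)
  moreover have "(g + e)^2 = g^2 + 2 * g * e + e^2" by (simp add: power2_eq_square algebra_simps)
  moreover have "(1 + l) * g^2 + (1 + 1 / l) * 25 = g^2 + l * g^2 + 25 + 25 / l" by (simp add: algebra_simps)
  ultimately show ?thesis by linarith
qed

lemma sqrt_diff_le1:
  fixes x y :: real
  assumes "0 \<le> x" "0 \<le> y" "\<bar>x - y\<bar> \<le> 1"
  shows "\<bar>sqrt x - sqrt y\<bar> \<le> 1"
proof -
  have g: "sqrt a \<le> sqrt b + 1" if "0 \<le> a" "0 \<le> b" "a \<le> b + 1" for a b :: real
  proof -
    have "sqrt a \<le> sqrt (b + 1)" using that by (simp add: real_sqrt_le_mono)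
    also have "b + 1 \<le> (sqrt b + 1)^2" using that by (simp add: power2_eq_square algebra_simps)
    then have "sqrt (b + 1) \<le> sqrt ((sqrt b + 1)^2)" by (rule real_sqrt_le_mono)
    also have "sqrt ((sqrt b + 1)^2) = sqrt b + 1" using that by simp
    finally show ?thesis .
  qed
  have "sqrt x \<le> sqrt y + 1" using g[of x y] assms by linarith
  moreover have "sqrt y \<le> sqrt x + 1" using g[of y x] assms by linarith
  ultimately show ?thesis by linarith
qed

lemma content_unit: "Henstock_Kurzweil_Integration.content (cbox (0::real,0::real) (1,1)) = 1"
  by (simp add: content_Pair)

lemma const_int: "((\<lambda>x::real\<times>real. c) has_integral c) (cbox (0,0) (1,1))"
  using has_integral_const[of c "(0::real,0::real)" "(1,1)"] content_unit by simp

lemma main_bound: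
  "\<bar>sqrt (integral (cbox (0,0) (1,1)) (\<lambda>ab. (local_disc (fst ab) (snd ab) (sym_hammersley (length s) s))^2))
     - sqrt (real (length s + 1) / 24)\<bar> \<le> 9"
proof -
  let ?N = "(2::nat)^length s"
  define Nr where "Nr = real ?N"
  have Nr1: "1 \<le> Nr" unfolding Nr_def by simp
  have eqf: "(\<lambda>ab. (local_disc (fst ab) (snd ab) (sym_hammersley (length s) s))^2) = (\<lambda>x. (DD s (fst x) (snd x))^2)"
    by (rule ext) (simp add: local_disc_eq)
  define I where "I = integral (cbox (0,0) (1,1)) (\<lambda>x. (DD s (fst x) (snd x))^2)"
  define Q where "Q = SS s / Nr^2"
  have bndD: "\<bar>(DD s (fst x) (snd x))^2\<bar> \<le> (4 * Nr)^2" if x: "x \<in> cbox (0,0) (1,1)" for x :: "real \<times> real"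
  proof -
    have a: "\<bar>fst x\<bar> \<le> 1" "\<bar>snd x\<bar> \<le> 1" using x by (cases x, auto simp: cbox_Pair_iff)+
    have "\<bar>fst x\<bar> * \<bar>snd x\<bar> \<le> 1" using a by (simp add: mult_le_one)
    then have "2 * Nr * \<bar>fst x\<bar> * \<bar>snd x\<bar> \<le> 2 * Nr" using Nr1
      by (metis mult.assoc mult_left_le order_less_le_trans zero_less_one linorder_not_le mult_nonneg_nonneg
          abs_ge_zero zero_le_numeral mult_le_cancel_left1 less_eq_real_def)
    then have "\<bar>DD s (fst x) (snd x)\<bar> \<le> 4 * Nr" using DD_bound[of s "fst x" "snd x"] unfolding Nr_def by linarith
    then have "\<bar>DD s (fst x) (snd x)\<bar>^2 \<le> (4 * Nr)^2" by (rule power_mono) simp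
    then show ?thesis by simp
  qed
  have intD: "(\<lambda>x. (DD s (fst x) (snd x))^2) integrable_on cbox (0,0) (1,1)"
    by (rule bdd_meas_integrable[OF DD_meas bndD])
  have hI: "((\<lambda>x. (DD s (fst x) (snd x))^2) has_integral I) (cbox (0,0) (1,1))"
    unfolding I_def using intD by (rule integrable_integral)
  have hQ: "((\<lambda>x. (gg s x)^2) has_integral Q) (cbox (0,0) (1,1))"
    unfolding Q_def Nr_def by (rule gg_sq_integral)
  have I0: "0 \<le> I" using has_integral_nonneg[OF hI] by simp
  have Q0: "0 \<le> Q" unfolding Q_def SS_def by (simp add: sum_nonneg)
  have up: "I \<le> (1 + l) * Q + (1 + 1 / l) * 25" if l: "l > 0" for l :: real
  proof (rule has_integral_le[OF hI])
    show "((\<lambda>x. (1 + l) * (gg s x)^2 + (1 + 1 / l) * 25) has_integral (1 + l) * Q + (1 + 1 / l) * 25) (cbox (0,0) (1,1))"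
      by (intro has_integral_add has_integral_cmult_real hQ const_int)
    fix x :: "real \<times> real" assume x: "x \<in> cbox (0,0) (1,1)"
    have e: "\<bar>DD s (fst x) (snd x) - gg s x\<bar> \<le> 5" by (rule DD_gg_bound[OF x])
    show "(DD s (fst x) (snd x))^2 \<le> (1 + l) * (gg s x)^2 + (1 + 1 / l) * 25"
      using young_sq[OF l e, of "gg s x"] by simp
  qed
  have lo: "Q \<le> (1 + l) * I + (1 + 1 / l) * 25" if l: "l > 0" for l :: real
  proof (rule has_integral_le[OF hQ])
    show "((\<lambda>x. (1 + l) * (DD s (fst x) (snd x))^2 + (1 + 1 / l) * 25) has_integral (1 + l) * I + (1 + 1 / l) * 25) (cbox (0,0) (1,1))"
      by (intro has_integral_add has_integral_cmult_real hI const_int)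
    fix x :: "real \<times> real" assume x: "x \<in> cbox (0,0) (1,1)"
    have e: "\<bar>gg s x - DD s (fst x) (snd x)\<bar> \<le> 5" using DD_gg_bound[OF x, of s] by linarith
    show "(gg s x)^2 \<le> (1 + l) * (DD s (fst x) (snd x))^2 + (1 + 1 / l) * 25"
      using young_sq[OF l e, of "DD s (fst x) (snd x)"] by simp
  qed
  have d1: "\<bar>sqrt I - sqrt Q\<bar> \<le> 8"
    using sqrt_compare[OF I0 Q0 up] sqrt_compare[OF Q0 I0 lo] by linarith
  have Qb: "real (length s) / 24 \<le> Q" "Q \<le> real (length s) / 24 + 1"
  proof -
    have p: "0 < Nr^2" using Nr1 by simp
    from SS_bounds[of s] have "real (length s) / 24 * Nr^2 \<le> SS s" "SS s \<le> real (length s) / 24 * Nr^2 + Nr^2"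
      unfolding Nr_def by auto
    then show "real (length s) / 24 \<le> Q" "Q \<le> real (length s) / 24 + 1"
      unfolding Q_def using p by (simp_all add: field_simps)
  qed
  have d2: "\<bar>sqrt Q - sqrt (real (length s + 1) / 24)\<bar> \<le> 1"
  proof (rule sqrt_diff_le1)
    show "0 \<le> Q" by (rule Q0)
    show "0 \<le> real (length s + 1) / 24" by simp
    have "Q - real (length s + 1) / 24 \<le> 1" using Qb by (simp add: field_simps)
    moreover have "real (length s + 1) / 24 - Q \<le> 1" using Qb by (simp add: field_simps)
    ultimately show "\<bar>Q - real (length s + 1) / 24\<bar> \<le> 1" by (simp add: abs_le_iff)
  qed
  show ?thesis unfolding eqf I_def[symmetric] using d1 d2 by linarith
qed

theorem corollary1:
  shows "\<exists>C>0. \<forall>m::nat. \<forall>\<sigma>::bool list. length \<sigma> = m \<longrightarrow>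
    \<bar>L2_disc (sym_hammersley m \<sigma>) -
      (1 / real (2 ^ (m + 1))) * sqrt (ln (real (2 ^ (m + 1))) / (24 * ln 2))\<bar>
    \<le> C / real (2 ^ (m + 1))"
proof (intro exI[of _ 9] conjI allI impI)
  show "(0::real) < 9" by simp
  fix m :: nat and \<sigma> :: "bool list"
  assume len: "length \<sigma> = m"
  have L: "length (sym_hammersley m \<sigma>) = 2 ^ (m + 1)"
    unfolding sym_hammersley_def shifted_hammersley_def by (simp add: length_n_lists mult_2 numeral_2_eq_2)
  have lnq: "ln (real ((2::nat) ^ (m + 1))) / (24 * ln 2) = real (m + 1) / 24"
  proof -
    have e: "real ((2::nat) ^ (m + 1)) = (2::real) ^ (m + 1)" by simp
    have "ln ((2::real) ^ (m + 1)) = real (m + 1) * ln 2" by (rule ln_realpow)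
    then have "ln (real ((2::nat) ^ (m + 1))) = real (m + 1) * ln 2" by (simp only: e)
    moreover have "ln (2::real) > 0" by simp
    ultimately show ?thesis by simp
  qed
  define X where "X = sqrt (integral (cbox (0,0) (1,1)) (\<lambda>ab. (local_disc (fst ab) (snd ab) (sym_hammersley m \<sigma>))^2))"
  have mb: "\<bar>X - sqrt (real (m + 1) / 24)\<bar> \<le> 9"
    using main_bound[of \<sigma>] unfolding X_def len .
  have L2: "L2_disc (sym_hammersley m \<sigma>) = (1 / real ((2::nat) ^ (m + 1))) * X"
    unfolding L2_disc_def X_def L ..
  have p: "(0::real) < real ((2::nat) ^ (m + 1))" by simp
  have "\<bar>L2_disc (sym_hammersley m \<sigma>) - (1 / real ((2::nat) ^ (m + 1))) * sqrt (ln (real ((2::nat) ^ (m + 1))) / (24 * ln 2))\<bar>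
      = (1 / real ((2::nat) ^ (m + 1))) * \<bar>X - sqrt (real (m + 1) / 24)\<bar>"
  proof -
    have gen: "\<And>c A B::real. 0 \<le> c \<Longrightarrow> \<bar>c * A - c * B\<bar> = c * \<bar>A - B\<bar>"
      by (simp add: abs_mult right_diff_distrib[symmetric])
    show ?thesis unfolding L2 lnq by (rule gen) (use p in simp)
  qed
  also have "\<dots> \<le> (1 / real ((2::nat) ^ (m + 1))) * 9"
    using mb p by (intro mult_left_mono) simp_all
  finally show "\<bar>L2_disc (sym_hammersley m \<sigma>) - (1 / real ((2::nat) ^ (m + 1))) * sqrt (ln (real ((2::nat) ^ (m + 1))) / (24 * ln 2))\<bar>
      \<le> 9 / real ((2::nat) ^ (m + 1))" by simp
qed

end
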